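(* Let $h_\bullet=(h_0,h_1,\ldots)$ be a sequence of nonnegative integers with $h_0=1$. Then $h_\bullet$ is unimodal at each tail if and only if there exist a field $k$, a polynomial ring $R=k[x_1,\ldots,x_n]$ and an almost reverse lexicographic ideal $I\subset R$ with $H(R/I,d)=h_d$ for all $d\ge0$.
   Context: $H(R/I,d)=\dim_k(R/I)_d$. Degree reverse lexicographic order: for $M=x^\alpha,N=x^\beta$, $M>N$ iff $\deg M>\deg N$, or degrees are equal and for the largest $s$ with $\alpha_s\neq\beta_s$ one has $\alpha_s<\beta_s$. A monomial ideal $I$ is almost reverse lexicographic if for every monomial $M$ and every minimal monomial generator $N$ of $I$ with $\deg M=\deg N$ and $M>N$, $M\in I$ (the zero ideal counts). For $h_\bullet$ with $h_0=1$: $h^{(0)}_\bullet=h_\bullet$ and, for $1\le i<h_1$, $h^{(i)}_0=1$, $h^{(i)}_d=\max\{0,h^{(i-1)}_d-h^{(i-1)}_{d-1}\}$ for $d\ge1$. For $0\le i<\max\{1,h_1\}$, $r_i=\min\{d\ge1:h^{(i)}_d\le h^{(i)}_{d-1}\}$ ($\infty$ if none), and $D(h_\bullet)=\min\{i:r_i<\infty\}$. Unimodal at each tail: for every $i$ with $D(h_\bullet)\le i<\max\{1,h_1\}$, $h^{(i)}_d\le h^{(i)}_{d-1}$ for all $d\ge r_i$. *)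

theory Defs
  imports Main
begin

text \<open>Monomials of k[x_1,...,x_n] are encoded by exponent vectors
  alpha :: nat => nat with alpha i = 0 for i >= n (variable x_(i+1) has index i).
  A monomial ideal I of R is encoded by the set of monomials it contains;
  it is the k-span of these monomials.\<close>

definition mons :: "nat \<Rightarrow> (nat \<Rightarrow> nat) set" where
  "mons n = {\<alpha>. \<forall>i\<ge>n. \<alpha> i = 0}"

definition mdeg :: "nat \<Rightarrow> (nat \<Rightarrow> nat) \<Rightarrow> nat" where
  "mdeg n \<alpha> = (\<Sum>i<n. \<alpha> i)"

definition mdvd :: "(nat \<Rightarrow> nat) \<Rightarrow> (nat \<Rightarrow> nat) \<Rightarrow> bool" where
  "mdvd \<alpha> \<beta> \<longleftrightarrow> (\<forall>i. \<alpha> i \<le> \<beta> i)"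

definition monomial_ideal :: "nat \<Rightarrow> (nat \<Rightarrow> nat) set \<Rightarrow> bool" where
  "monomial_ideal n I \<longleftrightarrow> I \<subseteq> mons n \<and>
     (\<forall>\<alpha>\<in>I. \<forall>\<beta>\<in>mons n. mdvd \<alpha> \<beta> \<longrightarrow> \<beta> \<in> I)"

definition min_gen :: "(nat \<Rightarrow> nat) set \<Rightarrow> (nat \<Rightarrow> nat) \<Rightarrow> bool" where
  "min_gen I N \<longleftrightarrow> N \<in> I \<and> (\<forall>M\<in>I. mdvd M N \<longrightarrow> M = N)"

definition revlex_gt :: "nat \<Rightarrow> (nat \<Rightarrow> nat) \<Rightarrow> (nat \<Rightarrow> nat) \<Rightarrow> bool" where
  "revlex_gt n \<alpha> \<beta> \<longleftrightarrow> mdeg n \<alpha> > mdeg n \<beta> \<or>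
     (mdeg n \<alpha> = mdeg n \<beta> \<and>
      (\<exists>s<n. \<alpha> s \<noteq> \<beta> s \<and> (\<forall>t. s < t \<and> t < n \<longrightarrow> \<alpha> t = \<beta> t) \<and> \<alpha> s < \<beta> s))"

definition almost_revlex :: "nat \<Rightarrow> (nat \<Rightarrow> nat) set \<Rightarrow> bool" where
  "almost_revlex n I \<longleftrightarrow> monomial_ideal n I \<and>
     (\<forall>M\<in>mons n. \<forall>N. min_gen I N \<longrightarrow> mdeg n M = mdeg n N \<longrightarrow> revlex_gt n M N \<longrightarrow> M \<in> I)"

text \<open>H(R/I,d) = dim_k (R/I)_d = number of degree-d monomials not in I.\<close>
definition hilb :: "nat \<Rightarrow> (nat \<Rightarrow> nat) set \<Rightarrow> nat \<Rightarrow> nat" where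
  "hilb n I d = card {\<alpha> \<in> mons n. mdeg n \<alpha> = d \<and> \<alpha> \<notin> I}"

text \<open>The sequences h^(i); on nat, max{0, a - b} is truncated subtraction a - b.\<close>
fun hder :: "(nat \<Rightarrow> nat) \<Rightarrow> nat \<Rightarrow> nat \<Rightarrow> nat" where
  "hder h 0 = h"
| "hder h (Suc i) = (\<lambda>d. if d = 0 then 1 else hder h i d - hder h i (d - 1))"

text \<open>r_i < infinity, and its value.\<close>
definition r_fin :: "(nat \<Rightarrow> nat) \<Rightarrow> nat \<Rightarrow> bool" where
  "r_fin h i \<longleftrightarrow> (\<exists>d\<ge>1. hder h i d \<le> hder h i (d - 1))"

definition r_val :: "(nat \<Rightarrow> nat) \<Rightarrow> nat \<Rightarrow> nat" where
  "r_val h i = (LEAST d. d \<ge> 1 \<and> hder h i d \<le> hder h i (d - 1))"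

definition D_idx :: "(nat \<Rightarrow> nat) \<Rightarrow> nat" where
  "D_idx h = (LEAST i. i < max 1 (h 1) \<and> r_fin h i)"

definition unimodal_at_each_tail :: "(nat \<Rightarrow> nat) \<Rightarrow> bool" where
  "unimodal_at_each_tail h \<longleftrightarrow>
     (\<forall>i. D_idx h \<le> i \<and> i < max 1 (h 1) \<longrightarrow> r_fin h i \<longrightarrow>
        (\<forall>d\<ge>r_val h i. hder h i d \<le> hder h i (d - 1)))"

end

theory Submission
  imports Defs "HOL-Library.FuncSet"
begin

lemma mdeg_Suc: "mdeg (Suc k) a = mdeg k a + a k"
  by (simp add: mdeg_def)

lemma mdeg_upd_out: "j \<ge> n \<Longrightarrow> mdeg n (a(j := v)) = mdeg n a"
  unfolding mdeg_def by (rule sum.cong) auto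

lemma mdeg_upd: "j < n \<Longrightarrow> mdeg n (a(j := v)) + a j = mdeg n a + v"
proof -
  assume j: "j < n"
  have "mdeg n (a(j := v)) = v + (\<Sum>i\<in>{..<n} - {j}. a i)"
    unfolding mdeg_def using j by (subst sum.remove[of _ j]) auto
  moreover have "mdeg n a = a j + (\<Sum>i\<in>{..<n} - {j}. a i)"
    unfolding mdeg_def using j by (subst sum.remove[of _ j]) auto
  ultimately show ?thesis by simp
qed

lemma mons_Suc: "a \<in> mons (Suc k) \<longleftrightarrow> a(k := 0) \<in> mons k"
  unfolding mons_def by auto

lemma mons_mono: "a \<in> mons k \<Longrightarrow> a \<in> mons (Suc k)"
  unfolding mons_def by auto

lemma mons_k_zero: "a \<in> mons k \<Longrightarrow> a k = 0"
  unfolding mons_def by auto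

lemma mons_upd: "j < n \<Longrightarrow> a \<in> mons n \<Longrightarrow> a(j := v) \<in> mons n"
  unfolding mons_def by auto

lemma le_mdeg: "i < n \<Longrightarrow> a i \<le> mdeg n a"
  unfolding mdeg_def by (rule member_le_sum) auto

lemma finite_deg: "finite {a \<in> mons n. mdeg n a = d}"
proof -
  have "{a \<in> mons n. mdeg n a = d} \<subseteq> (\<lambda>f i. if i < n then f i else 0) ` (PiE {..<n} (\<lambda>_. {..d}))"
  proof
    fix a assume a: "a \<in> {a \<in> mons n. mdeg n a = d}"
    have "a = (\<lambda>i. if i < n then restrict a {..<n} i else 0)"
      using a unfolding mons_def by (auto simp: fun_eq_iff restrict_def)
    moreover have "restrict a {..<n} \<in> PiE {..<n} (\<lambda>_. {..d})"
      using a le_mdeg[of _ n a] by (auto simp: PiE_iff)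
    ultimately show "a \<in> (\<lambda>f i. if i < n then f i else 0) ` (PiE {..<n} (\<lambda>_. {..d}))"
      by blast
  qed
  moreover have "finite (PiE {..<n} (\<lambda>_. {..d::nat}))" by (rule finite_PiE) auto
  ultimately show ?thesis by (meson finite_imageI finite_subset)
qed

lemma mdeg_zero: "a \<in> mons n \<Longrightarrow> mdeg n a = 0 \<longleftrightarrow> a = (\<lambda>_. 0)"
  unfolding mons_def mdeg_def by (auto simp: fun_eq_iff) (meson not_less lessThan_iff)

lemma mdvd_mdeg: "mdvd a b \<Longrightarrow> mdeg n a \<le> mdeg n b"
  unfolding mdvd_def mdeg_def by (simp add: sum_mono)

definition rl :: "nat \<Rightarrow> (nat \<Rightarrow> nat) \<Rightarrow> (nat \<Rightarrow> nat) \<Rightarrow> bool" where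
  "rl n a b \<longleftrightarrow> (\<exists>s<n. a s < b s \<and> (\<forall>t. s < t \<and> t < n \<longrightarrow> a t = b t))"

lemma revlex_rl: "mdeg n a = mdeg n b \<Longrightarrow> revlex_gt n a b \<longleftrightarrow> rl n a b"
  unfolding revlex_gt_def rl_def by auto

lemma rl_irrefl: "\<not> rl n a a"
  unfolding rl_def by auto

lemma rl_trans: assumes "rl n a b" "rl n b c" shows "rl n a c"
proof -
  obtain s1 where s1: "s1 < n" "a s1 < b s1" "\<And>t. s1 < t \<Longrightarrow> t < n \<Longrightarrow> a t = b t"
    using assms(1) unfolding rl_def by auto
  obtain s2 where s2: "s2 < n" "b s2 < c s2" "\<And>t. s2 < t \<Longrightarrow> t < n \<Longrightarrow> b t = c t"
    using assms(2) unfolding rl_def by auto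
  show ?thesis
  proof (cases s1 s2 rule: linorder_cases)
    case less
    have "a s2 < c s2" using s1(3)[of s2] s2 less by simp
    moreover have "\<forall>t. s2 < t \<and> t < n \<longrightarrow> a t = c t" using s1(3) s2(3) less by simp
    ultimately show ?thesis unfolding rl_def using s2(1) by blast
  next
    case equal
    have "a s2 < c s2" using s1 s2 equal by simp
    moreover have "\<forall>t. s2 < t \<and> t < n \<longrightarrow> a t = c t" using s1(3) s2(3) equal by simp
    ultimately show ?thesis unfolding rl_def using s2(1) by blast
  next
    case greater
    have "a s1 < c s1" using s2(3)[of s1] s1 greater by simp
    moreover have "\<forall>t. s1 < t \<and> t < n \<longrightarrow> a t = c t" using s1(3) s2(3) greater by simp
    ultimately show ?thesis unfolding rl_def using s1(1) by blast
  qed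
qed

lemma rl_total: assumes "a \<in> mons n" "b \<in> mons n" "a \<noteq> b"
  shows "rl n a b \<or> rl n b a"
proof -
  obtain j where j: "a j \<noteq> b j" using assms(3) by auto
  have jn: "j < n"
  proof (rule ccontr)
    assume "\<not> j < n"
    then have "a j = 0" "b j = 0" using assms(1,2) unfolding mons_def by auto
    then show False using j by simp
  qed
  define D where "D = {i. i < n \<and> a i \<noteq> b i}"
  have fD: "finite D" "D \<noteq> {}" unfolding D_def using j jn by auto
  define s where "s = Max D"
  have sD: "s \<in> D" unfolding s_def using fD by simp
  have above: "\<forall>t. s < t \<and> t < n \<longrightarrow> a t = b t"
  proof (intro allI impI)
    fix t assume t: "s < t \<and> t < n"
    show "a t = b t"
    proof (rule ccontr)
      assume "a t \<noteq> b t"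
      then have "t \<in> D" using t unfolding D_def by simp
      then have "t \<le> s" unfolding s_def using fD(1) by simp
      then show False using t by simp
    qed
  qed
  have sn: "s < n" and ne: "a s \<noteq> b s" using sD unfolding D_def by auto
  show ?thesis
  proof (cases "a s < b s")
    case True then show ?thesis using sn above unfolding rl_def by blast
  next
    case False then have "b s < a s" using ne by simp
    moreover have "\<forall>t. s < t \<and> t < n \<longrightarrow> b t = a t" using above by simp
    ultimately show ?thesis using sn unfolding rl_def by blast
  qed
qed

lemma split_count:
  "card {b \<in> mons (Suc k). mdeg (Suc k) b = Suc d \<and> P b} =
   card {b \<in> mons k. mdeg k b = Suc d \<and> P b} +
   card {c \<in> mons (Suc k). mdeg (Suc k) c = d \<and> P (c(k := Suc (c k)))}"
proof -
  let ?A = "{b \<in> mons (Suc k). mdeg (Suc k) b = Suc d \<and> P b}"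
  let ?Az = "{b \<in> mons k. mdeg k b = Suc d \<and> P b}"
  let ?Ao = "{b \<in> mons (Suc k). mdeg (Suc k) b = Suc d \<and> P b \<and> b k > 0}"
  let ?C = "{c \<in> mons (Suc k). mdeg (Suc k) c = d \<and> P (c(k := Suc (c k)))}"
  have fin: "finite ?A"
    by (rule rev_finite_subset[OF finite_deg[of "Suc k" "Suc d"]]) blast
  have eq0: "?Az = {b \<in> ?A. b k = 0}"
  proof (rule set_eqI, rule iffI)
    fix b assume b: "b \<in> ?Az"
    have "b k = 0" using b mons_k_zero by blast
    then show "b \<in> {b \<in> ?A. b k = 0}" using b mons_mono mdeg_Suc[of k b] by simp
  next
    fix b assume b: "b \<in> {b \<in> ?A. b k = 0}"
    have "b \<in> mons (Suc k)" "b k = 0" using b by auto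
    then have "b \<in> mons k" using mons_Suc[of b k] by (simp add: fun_upd_idem)
    then show "b \<in> ?Az" using b mdeg_Suc[of k b] by simp
  qed
  have eq1: "?Ao = {b \<in> ?A. b k \<noteq> 0}" by auto
  have "card ?A = card {b \<in> ?A. b k = 0} + card {b \<in> ?A. b k \<noteq> 0}"
  proof -
    have "card ?A = card ({b \<in> ?A. b k = 0} \<union> {b \<in> ?A. b k \<noteq> 0})"
      by (rule arg_cong[where f=card]) blast
    also have "\<dots> = card {b \<in> ?A. b k = 0} + card {b \<in> ?A. b k \<noteq> 0}"
      by (rule card_Un_disjoint) (use fin in \<open>auto intro: rev_finite_subset[OF fin]\<close>)
    finally show ?thesis .
  qed
  moreover have "card ?C = card ?Ao"
  proof (rule bij_betw_same_card[of "\<lambda>c. c(k := Suc (c k))"])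
    show "bij_betw (\<lambda>c. c(k := Suc (c k))) ?C ?Ao"
    proof (rule bij_betw_byWitness[where f'="\<lambda>b. b(k := b k - 1)"])
      show "\<forall>a\<in>?C. (\<lambda>b. b(k := b k - 1)) (a(k := Suc (a k))) = a" by auto
      show "\<forall>a'\<in>?Ao. (\<lambda>c. c(k := Suc (c k))) ((\<lambda>b. b(k := b k - 1)) a') = a'" by (auto simp: fun_eq_iff)
      show "(\<lambda>c. c(k := Suc (c k))) ` ?C \<subseteq> ?Ao"
      proof
        fix b assume "b \<in> (\<lambda>c. c(k := Suc (c k))) ` ?C"
        then obtain c where c: "c \<in> ?C" "b = c(k := Suc (c k))" by auto
        have "mdeg (Suc k) b = Suc d" using c mdeg_Suc[of k] mdeg_upd_out[of k k] by simp
        then show "b \<in> ?Ao" using c mons_upd[of k "Suc k"] by auto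
      qed
      show "(\<lambda>b. b(k := b k - 1)) ` ?Ao \<subseteq> ?C"
      proof
        fix c assume "c \<in> (\<lambda>b. b(k := b k - 1)) ` ?Ao"
        then obtain b where b: "b \<in> ?Ao" "c = b(k := b k - 1)" by auto
        have "mdeg (Suc k) c = d" using b mdeg_Suc[of k] mdeg_upd_out[of k k] by simp
        moreover have "c(k := Suc (c k)) = b" using b by (auto simp: fun_eq_iff)
        ultimately show "c \<in> ?C" using b mons_upd[of k "Suc k"] by auto
      qed
    qed
  qed
  ultimately show ?thesis unfolding eq0[symmetric] eq1[symmetric] by linarith
qed

definition shape :: "(nat \<Rightarrow> nat) \<Rightarrow> bool" where
  "shape g \<longleftrightarrow> (\<forall>d\<ge>1. g d \<le> g (d - 1) \<longrightarrow> (\<forall>e\<ge>d. g e \<le> g (e - 1)))"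

lemma hder_Suc': "hder h (Suc i) = hder (hder h 1) i"
proof (induction i)
  case 0 then show ?case by (simp add: fun_eq_iff)
next
  case (Suc i)
  show ?case using Suc by (simp only: hder.simps)
qed

lemma hder_0: "h 0 = 1 \<Longrightarrow> hder h i 0 = 1"
  by (cases i) auto

lemma hder_1: "h 0 = 1 \<Longrightarrow> hder h i 1 = h 1 - i"
  by (induction i) (auto simp: hder_0)

definition delta :: "nat \<Rightarrow> nat" where "delta d = (if d = 0 then 1 else 0)"

lemma hder_delta: "hder delta i = delta"
  by (induction i) (auto simp: fun_eq_iff delta_def)

lemma shape_delta: "shape delta"
  unfolding shape_def delta_def by auto

lemma mi_sub: "monomial_ideal n I \<Longrightarrow> a \<in> I \<Longrightarrow> a \<in> mons n"
  unfolding monomial_ideal_def by auto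

lemma mi_up: "monomial_ideal n I \<Longrightarrow> a \<in> I \<Longrightarrow> b \<in> mons n \<Longrightarrow> mdvd a b \<Longrightarrow> b \<in> I"
  unfolding monomial_ideal_def by auto

lemma mdvd_upd_Suc: "mdvd a (a(j := Suc (a j)))"
  unfolding mdvd_def by auto

lemma mdvd_upd_pred: "mdvd (a(j := a j - 1)) a"
  unfolding mdvd_def by auto

lemma mdvd_refl: "mdvd a a" unfolding mdvd_def by auto

lemma mdvd_trans: "mdvd a b \<Longrightarrow> mdvd b c \<Longrightarrow> mdvd a c"
  unfolding mdvd_def by (meson order_trans)

lemma mons_lt: "a \<in> mons n \<Longrightarrow> a j \<noteq> 0 \<Longrightarrow> j < n"
  by (rule ccontr) (auto simp: mons_def)

definition allin :: "nat \<Rightarrow> (nat \<Rightarrow> nat) set \<Rightarrow> nat \<Rightarrow> bool" where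
  "allin k I d \<longleftrightarrow> (\<forall>b\<in>mons k. mdeg k b = d \<longrightarrow> b \<in> I)"

lemma exists_pos:
  assumes "b \<in> mons k" "mdeg k b = Suc d"
  shows "\<exists>j<k. b j > 0"
proof (rule ccontr)
  assume "\<not> ?thesis"
  then have "mdeg k b = 0" unfolding mdeg_def by auto
  then show False using assms by simp
qed

lemma allin_step:
  assumes mi: "monomial_ideal (Suc k) I" and a: "allin k I d"
  shows "allin k I (Suc d)"
  unfolding allin_def
proof (intro ballI impI)
  fix b assume b: "b \<in> mons k" "mdeg k b = Suc d"
  obtain j where j: "j < k" "b j > 0" using exists_pos[OF b] by auto
  let ?c = "b(j := b j - 1)"
  have "?c \<in> mons k" using b j mons_upd by blast
  moreover have "mdeg k ?c = d" using mdeg_upd[OF j(1), of b "b j - 1"] b j by simp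
  ultimately have "?c \<in> I" using a unfolding allin_def by blast
  then show "b \<in> I" using mi_up[OF mi _ mons_mono[OF b(1)] mdvd_upd_pred] by blast
qed

lemma allin_mono:
  assumes mi: "monomial_ideal (Suc k) I" and a: "allin k I d" and "d \<le> e"
  shows "allin k I e"
  using assms(3)
proof (induction e)
  case 0 then show ?case using a by simp
next
  case (Suc e)
  then show ?case
    by (metis a allin_step le_Suc_eq mi)
qed

lemma kernel:
  assumes ar: "almost_revlex (Suc k) I"
  shows "m \<in> mons (Suc k) \<Longrightarrow> mdeg (Suc k) m = d \<Longrightarrow> m \<notin> I \<Longrightarrow>
         m(k := Suc (m k)) \<in> I \<Longrightarrow> allin k I (Suc d)"
proof (induction d arbitrary: m)
  case (0 m) note C = this
  show ?case
  proof (cases "min_gen I (m(k := Suc (m k)))")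
    case True
    show ?thesis unfolding allin_def
    proof (intro ballI impI)
      fix b assume b: "b \<in> mons k" "mdeg k b = Suc 0"
      let ?N = "m(k := Suc (m k))"
      have bS: "b \<in> mons (Suc k)" using b mons_mono by blast
      have dN: "mdeg (Suc k) ?N = Suc 0" using C mdeg_Suc[of k] mdeg_upd_out[of k k] by simp
      have db: "mdeg (Suc k) b = Suc 0" using b mdeg_Suc[of k b] mons_k_zero by simp
      have "rl (Suc k) b ?N" unfolding rl_def using mons_k_zero[OF b(1)]
        by (intro exI[of _ k]) auto
      then have "revlex_gt (Suc k) b ?N" using revlex_rl dN db by simp
      then show "b \<in> I" using ar True bS dN db unfolding almost_revlex_def by auto
    qed
  next
    case False
    then obtain G where G: "G \<in> I" "mdvd G (m(k := Suc (m k)))" "G \<noteq> m(k := Suc (m k))"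
      using C unfolding min_gen_def by blast
    have mi: "monomial_ideal (Suc k) I" using ar unfolding almost_revlex_def by simp
    have "\<not> mdvd G m" using mi_up[OF mi G(1) C(1)] C(3) by blast
    then obtain i where i: "G i > m i" unfolding mdvd_def by (meson not_le)
    have "G i \<le> (m(k := Suc (m k))) i" using G(2) unfolding mdvd_def by blast
    then have "i = k" using i by (cases "i = k") auto
    then have Gk: "G k = Suc (m k)" using i G(2) unfolding mdvd_def
      by (metis fun_upd_same le_antisym Suc_leI)
    obtain j where j: "G j \<noteq> (m(k := Suc (m k))) j" using G(3) by (meson ext)
    have "G j < (m(k := Suc (m k))) j" using j G(2) unfolding mdvd_def by (meson le_neq_implies_less)
    then have "j \<noteq> k" "0 < m j" using Gk by (auto split: if_splits)
    moreover have "j < Suc k" using C(1) \<open>0 < m j\<close> mons_lt by blast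
    ultimately have "m j \<le> mdeg (Suc k) m" "0 < m j" using le_mdeg by auto
    then show ?thesis using C(2) by simp
  qed
next
  case (Suc d m) note C = this
  show ?case
  proof (cases "min_gen I (m(k := Suc (m k)))")
    case True
    show ?thesis unfolding allin_def
    proof (intro ballI impI)
      fix b assume b: "b \<in> mons k" "mdeg k b = Suc (Suc d)"
      let ?N = "m(k := Suc (m k))"
      have bS: "b \<in> mons (Suc k)" using b mons_mono by blast
      have dN: "mdeg (Suc k) ?N = Suc (Suc d)" using C mdeg_Suc[of k] mdeg_upd_out[of k k] by simp
      have db: "mdeg (Suc k) b = Suc (Suc d)" using b mdeg_Suc[of k b] mons_k_zero by simp
      have "rl (Suc k) b ?N" unfolding rl_def using mons_k_zero[OF b(1)]
        by (intro exI[of _ k]) auto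
      then have "revlex_gt (Suc k) b ?N" using revlex_rl dN db by simp
      then show "b \<in> I" using ar True bS dN db unfolding almost_revlex_def by auto
    qed
  next
    case False
    then obtain G where G: "G \<in> I" "mdvd G (m(k := Suc (m k)))" "G \<noteq> m(k := Suc (m k))"
      using C unfolding min_gen_def by blast
    have mi: "monomial_ideal (Suc k) I" using ar unfolding almost_revlex_def by simp
    have "\<not> mdvd G m" using mi_up[OF mi G(1) C(2)] C(4) by blast
    then obtain i where i: "G i > m i" unfolding mdvd_def by (meson not_le)
    have "G i \<le> (m(k := Suc (m k))) i" using G(2) unfolding mdvd_def by blast
    then have "i = k" using i by (cases "i = k") auto
    then have Gk: "G k = Suc (m k)" using i G(2) unfolding mdvd_def
      by (metis fun_upd_same le_antisym Suc_leI)
    obtain j where j: "G j \<noteq> (m(k := Suc (m k))) j" using G(3) by (meson ext)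
    have Gj: "G j < (m(k := Suc (m k))) j" using j G(2) unfolding mdvd_def by (meson le_neq_implies_less)
    then have jk: "j \<noteq> k" "0 < m j" using Gk by (auto split: if_splits)
    moreover have jS: "j < Suc k" using C(2) \<open>0 < m j\<close> mons_lt by blast
    let ?m2 = "m(j := m j - 1)"
    have m2: "?m2 \<in> mons (Suc k)" using C(2) jS mons_upd by blast
    have dm2: "mdeg (Suc k) ?m2 = d" using mdeg_upd[OF jS, of m "m j - 1"] C(3) jk by simp
    have nm2: "?m2 \<notin> I" using mi_up[OF mi _ C(2) mdvd_upd_pred] C(4) by blast
    have "mdvd G (?m2(k := Suc (?m2 k)))" unfolding mdvd_def
    proof
      fix i
      show "G i \<le> (?m2(k := Suc (?m2 k))) i"
      proof (cases "i = k")
        case True then show ?thesis using Gk jk by simp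
      next
        case False
        show ?thesis
        proof (cases "i = j")
          case True then show ?thesis using Gj jk False by simp
        next
          case F2: False
          have "G i \<le> (m(k := Suc (m k))) i" using G(2) unfolding mdvd_def by blast
          then show ?thesis using False F2 by simp
        qed
      qed
    qed
    moreover have "?m2(k := Suc (?m2 k)) \<in> mons (Suc k)" using m2 mons_upd by blast
    ultimately have "?m2(k := Suc (?m2 k)) \<in> I" using mi_up[OF mi G(1)] by blast
    then have "allin k I (Suc d)" using C(1)[OF m2 dm2 nm2] by blast
    then show ?thesis using allin_step[OF mi] by blast
  qed
qed

lemma zero_mons: "(\<lambda>_. 0) \<in> mons n" unfolding mons_def by simp

lemma hilb0: "hilb n I 0 = (if (\<lambda>_. 0::nat) \<in> I then 0 else 1)"
proof -
  have "{a \<in> mons n. mdeg n a = 0 \<and> a \<notin> I} = (if (\<lambda>_. 0::nat) \<in> I then {} else {\<lambda>_. 0})"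
    using mdeg_zero[of _ n] zero_mons[of n] by auto
  then show ?thesis unfolding hilb_def by simp
qed

lemma ar_restrict:
  assumes ar: "almost_revlex (Suc k) I"
  shows "almost_revlex k {a \<in> I. a k = 0}"
proof -
  have mi: "monomial_ideal (Suc k) I" using ar unfolding almost_revlex_def by simp
  have sub: "\<And>a. a \<in> mons (Suc k) \<Longrightarrow> a k = 0 \<Longrightarrow> a \<in> mons k"
    using mons_Suc by (metis fun_upd_triv)
  have mi2: "monomial_ideal k {a \<in> I. a k = 0}"
    unfolding monomial_ideal_def
  proof (intro conjI ballI impI)
    show "{a \<in> I. a k = 0} \<subseteq> mons k" using mi_sub[OF mi] sub by blast
    fix a b assume a: "a \<in> {a \<in> I. a k = 0}" and b: "b \<in> mons k" and d: "mdvd a b"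
    show "b \<in> {a \<in> I. a k = 0}" using mi_up[OF mi _ mons_mono[OF b] d] a mons_k_zero[OF b] by blast
  qed
  show ?thesis unfolding almost_revlex_def
  proof (intro conjI mi2 ballI allI impI)
    fix M N assume M: "M \<in> mons k" and N: "min_gen {a \<in> I. a k = 0} N"
      and dg: "mdeg k M = mdeg k N" and gt: "revlex_gt k M N"
    have Nk: "N k = 0" "N \<in> I" using N unfolding min_gen_def by auto
    have NG: "min_gen I N" unfolding min_gen_def
    proof (intro conjI ballI impI)
      show "N \<in> I" using Nk by simp
      fix G assume G: "G \<in> I" "mdvd G N"
      have "G k = 0" using G(2) Nk unfolding mdvd_def by (metis le_zero_eq)
      then show "G = N" using N G unfolding min_gen_def by blast
    qed
    have Mk: "M k = 0" using mons_k_zero[OF M] .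
    have dg2: "mdeg (Suc k) M = mdeg (Suc k) N" using dg Mk Nk by (simp add: mdeg_Suc)
    have "rl k M N" using gt revlex_rl[OF dg] by simp
    then have "rl (Suc k) M N" unfolding rl_def using Mk Nk
      by (metis less_SucI less_antisym)
    then have "revlex_gt (Suc k) M N" using revlex_rl[OF dg2] by simp
    then have "M \<in> I" using ar NG dg2 mons_mono[OF M] unfolding almost_revlex_def by blast
    then show "M \<in> {a \<in> I. a k = 0}" using Mk by simp
  qed
qed

lemma hilb_restrict: "hilb k {a \<in> I. a k = 0} d = card {b \<in> mons k. mdeg k b = d \<and> b \<notin> I}"
  unfolding hilb_def
proof (rule arg_cong[where f=card])
  show "{a \<in> mons k. mdeg k a = d \<and> a \<notin> {a \<in> I. a k = 0}} = {b \<in> mons k. mdeg k b = d \<and> b \<notin> I}"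
    using mons_k_zero by blast
qed

lemma card0_allin: "card {b \<in> mons k. mdeg k b = d \<and> b \<notin> I} = 0 \<longleftrightarrow> allin k I d"
proof -
  have "finite {b \<in> mons k. mdeg k b = d \<and> b \<notin> I}"
    by (rule rev_finite_subset[OF finite_deg[of k d]]) blast
  then show ?thesis unfolding allin_def by auto
qed

lemma hilb_Suc_split:
  "hilb (Suc k) I (Suc d) = hilb k {a \<in> I. a k = 0} (Suc d) +
     card {c \<in> mons (Suc k). mdeg (Suc k) c = d \<and> c(k := Suc (c k)) \<notin> I}"
  unfolding hilb_restrict unfolding hilb_def by (rule split_count[of k d "\<lambda>b. b \<notin> I"])

lemma C_le:
  assumes mi: "monomial_ideal (Suc k) I"
  shows "card {c \<in> mons (Suc k). mdeg (Suc k) c = d \<and> c(k := Suc (c k)) \<notin> I} \<le> hilb (Suc k) I d"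
  unfolding hilb_def
proof (rule card_mono)
  show "finite {a \<in> mons (Suc k). mdeg (Suc k) a = d \<and> a \<notin> I}"
    by (rule rev_finite_subset[OF finite_deg[of "Suc k" d]]) blast
  show "{c \<in> mons (Suc k). mdeg (Suc k) c = d \<and> c(k := Suc (c k)) \<notin> I}
    \<subseteq> {a \<in> mons (Suc k). mdeg (Suc k) a = d \<and> a \<notin> I}"
    using mi_up[OF mi _ mons_upd[of k "Suc k"] mdvd_upd_Suc] by blast
qed

lemma C_eq:
  assumes ar: "almost_revlex (Suc k) I" and na: "\<not> allin k I (Suc d)"
  shows "card {c \<in> mons (Suc k). mdeg (Suc k) c = d \<and> c(k := Suc (c k)) \<notin> I} = hilb (Suc k) I d"
  unfolding hilb_def
proof (rule arg_cong[where f=card])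
  have mi: "monomial_ideal (Suc k) I" using ar unfolding almost_revlex_def by simp
  show "{c \<in> mons (Suc k). mdeg (Suc k) c = d \<and> c(k := Suc (c k)) \<notin> I}
    = {a \<in> mons (Suc k). mdeg (Suc k) a = d \<and> a \<notin> I}"
  proof (rule set_eqI, rule iffI)
    fix c assume "c \<in> {c \<in> mons (Suc k). mdeg (Suc k) c = d \<and> c(k := Suc (c k)) \<notin> I}"
    then show "c \<in> {a \<in> mons (Suc k). mdeg (Suc k) a = d \<and> a \<notin> I}"
      using mi_up[OF mi _ mons_upd[of k "Suc k"] mdvd_upd_Suc] by blast
  next
    fix c assume c: "c \<in> {a \<in> mons (Suc k). mdeg (Suc k) a = d \<and> a \<notin> I}"
    show "c \<in> {c \<in> mons (Suc k). mdeg (Suc k) c = d \<and> c(k := Suc (c k)) \<notin> I}"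
    proof (rule ccontr)
      assume "\<not> ?thesis"
      then have "c(k := Suc (c k)) \<in> I" using c by simp
      then have "allin k I (Suc d)" using kernel[OF ar, of c d] c by simp
      then show False using na by simp
    qed
  qed
qed

lemma nec_key:
  assumes ar: "almost_revlex (Suc k) I" and h0: "hilb (Suc k) I 0 = 1"
  shows "hder (hilb (Suc k) I) 1 = hilb k {a \<in> I. a k = 0}"
    and "shape (hilb (Suc k) I)"
proof -
  let ?h = "hilb (Suc k) I" and ?g = "hilb k {a \<in> I. a k = 0}"
  have mi: "monomial_ideal (Suc k) I" using ar unfolding almost_revlex_def by simp
  have z: "(\<lambda>_. 0::nat) \<notin> I"
  proof
    assume "(\<lambda>_. 0::nat) \<in> I"
    then have "hilb (Suc k) I 0 = 0" by (simp add: hilb0)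
    then show False using h0 by simp
  qed
  have g0: "?g 0 = 1" using z by (simp add: hilb0)
  have gall: "\<And>d. ?g d = 0 \<longleftrightarrow> allin k I d" using hilb_restrict card0_allin by metis
  have step: "\<And>d. (?g (Suc d) > 0 \<and> ?h (Suc d) = ?g (Suc d) + ?h d) \<or>
                   (?g (Suc d) = 0 \<and> ?h (Suc d) \<le> ?h d)"
  proof -
    fix d
    show "(?g (Suc d) > 0 \<and> ?h (Suc d) = ?g (Suc d) + ?h d) \<or> (?g (Suc d) = 0 \<and> ?h (Suc d) \<le> ?h d)"
    proof (cases "?g (Suc d) = 0")
      case True then show ?thesis using hilb_Suc_split[of k I d] C_le[OF mi, of d] by simp
    next
      case False
      then have "\<not> allin k I (Suc d)" using gall[of "Suc d"] by simp
      then show ?thesis using False hilb_Suc_split[of k I d] C_eq[OF ar] by simp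
    qed
  qed
  show "hder ?h 1 = ?g"
  proof
    fix d show "hder ?h 1 d = ?g d"
    proof (cases d)
      case 0 then show ?thesis using g0 by simp
    next
      case (Suc e) then show ?thesis using step[of e] by auto
    qed
  qed
  show "shape ?h" unfolding shape_def
  proof (intro allI impI)
    fix d e assume d: "1 \<le> d" and le: "?h d \<le> ?h (d - 1)" and e: "d \<le> e"
    obtain d' where d': "d = Suc d'" using d by (cases d) auto
    have "?g d = 0" using step[of d'] le d' by auto
    then have "allin k I d" using gall by blast
    then have "allin k I e" using allin_mono[OF mi _ e] by blast
    then have ge: "?g e = 0" using gall by blast
    obtain e' where e': "e = Suc e'" using d e by (cases e) auto
    show "?h e \<le> ?h (e - 1)" using step[of e'] ge e' by auto
  qed
qed

lemma hilb_0vars: "hilb 0 I 0 = 1 \<Longrightarrow> hilb 0 I = delta"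
proof
  fix d assume h: "hilb 0 I 0 = 1"
  show "hilb 0 I d = delta d"
  proof (cases d)
    case 0 then show ?thesis using h by (simp add: delta_def)
  next
    case (Suc e)
    have "\<And>a. mdeg 0 a = 0" by (simp add: mdeg_def)
    then have "{a \<in> mons 0. mdeg 0 a = d \<and> a \<notin> I} = {}" using Suc by simp
    then show ?thesis unfolding hilb_def delta_def using Suc by (simp only: card.empty) simp
  qed
qed

theorem necessity:
  "almost_revlex n I \<Longrightarrow> hilb n I 0 = 1 \<Longrightarrow> \<forall>i. shape (hder (hilb n I) i)"
proof (induction n arbitrary: I)
  case 0
  have "hilb 0 I = delta" using hilb_0vars 0(2) by blast
  then show ?case by (simp add: hder_delta shape_delta)
next
  case (Suc k I)
  have ar2: "almost_revlex k {a \<in> I. a k = 0}" using ar_restrict[OF Suc(2)] .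
  have e1: "hder (hilb (Suc k) I) 1 = hilb k {a \<in> I. a k = 0}"
    and sh: "shape (hilb (Suc k) I)" using nec_key[OF Suc(2,3)] by auto
  have "hilb k {a \<in> I. a k = 0} 0 = 1" using e1 hder_0[of "hilb (Suc k) I" 1] Suc(3) by metis
  then have IH: "\<forall>i. shape (hder (hilb k {a \<in> I. a k = 0}) i)" using Suc.IH[OF ar2] by blast
  show ?case
  proof
    fix i show "shape (hder (hilb (Suc k) I) i)"
    proof (cases i)
      case 0 then show ?thesis using sh by simp
    next
      case (Suc j) then show ?thesis using IH e1 hder_Suc' by metis
    qed
  qed
qed

definition rk :: "('a \<Rightarrow> 'a \<Rightarrow> bool) \<Rightarrow> 'a set \<Rightarrow> 'a \<Rightarrow> nat" where
  "rk R S a = card {b \<in> S. R a b}"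

definition bset :: "('a \<Rightarrow> 'a \<Rightarrow> bool) \<Rightarrow> 'a set \<Rightarrow> nat \<Rightarrow> 'a set" where
  "bset R S k = {a \<in> S. rk R S a < k}"

locale sorder =
  fixes R :: "'a \<Rightarrow> 'a \<Rightarrow> bool" and S :: "'a set"
  assumes fin: "finite S"
    and irr: "\<And>a. \<not> R a a"
    and trn: "\<And>a b c. R a b \<Longrightarrow> R b c \<Longrightarrow> R a c"
    and tot: "\<And>a b. a \<in> S \<Longrightarrow> b \<in> S \<Longrightarrow> a \<noteq> b \<Longrightarrow> R a b \<or> R b a"
begin

lemma rk_lt: "a \<in> S \<Longrightarrow> rk R S a < card S"
  unfolding rk_def
  by (rule psubset_card_mono[OF fin]) (use irr in auto)

lemma rk_less: assumes "a \<in> S" "b \<in> S" "R a b" shows "rk R S b < rk R S a"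
  unfolding rk_def
proof (rule psubset_card_mono)
  show "finite {c \<in> S. R a c}" using fin by simp
  show "{c \<in> S. R b c} \<subset> {c \<in> S. R a c}"
    using assms trn irr by blast
qed

lemma rk_inj: "inj_on (rk R S) S"
proof (rule inj_onI)
  fix a b assume a: "a \<in> S" and b: "b \<in> S" and eq: "rk R S a = rk R S b"
  show "a = b"
  proof (rule ccontr)
    assume "a \<noteq> b"
    then have "R a b \<or> R b a" using tot a b by blast
    then show False using rk_less[OF a b] rk_less[OF b a] eq by auto
  qed
qed

lemma rk_image: "rk R S ` S = {..<card S}"
proof -
  have "rk R S ` S \<subseteq> {..<card S}" using rk_lt by auto
  moreover have "card (rk R S ` S) = card {..<card S}"
    using card_image[OF rk_inj] by simp
  ultimately show ?thesis by (simp add: card_subset_eq)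
qed

lemma card_bset: "card (bset R S k) = min k (card S)"
proof -
  have "rk R S ` bset R S k = {x \<in> rk R S ` S. x < k}"
    unfolding bset_def by blast
  then have "rk R S ` bset R S k = {..<card S} \<inter> {..<k}"
    unfolding rk_image by auto
  moreover have "inj_on (rk R S) (bset R S k)"
    using rk_inj unfolding bset_def by (rule inj_on_subset) auto
  ultimately have "card (bset R S k) = card ({..<card S} \<inter> {..<k})"
    by (metis card_image)
  also have "{..<card S} \<inter> {..<k} = {..<min k (card S)}" by auto
  finally show ?thesis by simp
qed

lemma bset_sub: "bset R S k \<subseteq> S" unfolding bset_def by auto

lemma bset_mono: "k \<le> k' \<Longrightarrow> bset R S k \<subseteq> bset R S k'"
  unfolding bset_def by auto

lemma bset_down: "a \<in> bset R S k \<Longrightarrow> c \<in> S \<Longrightarrow> R a c \<Longrightarrow> c \<in> bset R S k"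
proof -
  assume a: "a \<in> bset R S k" and c: "c \<in> S" and r: "R a c"
  have "a \<in> S" "rk R S a < k" using a unfolding bset_def by auto
  moreover have "rk R S c < rk R S a" using rk_less[OF \<open>a \<in> S\<close> c r] .
  ultimately show ?thesis using c unfolding bset_def by simp
qed

end

lemma sorder_rl: "S \<subseteq> mons n \<Longrightarrow> finite S \<Longrightarrow> sorder (rl n) S"
proof (unfold_locales)
  assume "S \<subseteq> mons n" "finite S"
  then show "finite S" by simp
  show "\<And>a. \<not> rl n a a" by (rule rl_irrefl)
  show "\<And>a b c. rl n a b \<Longrightarrow> rl n b c \<Longrightarrow> rl n a c" by (rule rl_trans)
  show "\<And>a b. a \<in> S \<Longrightarrow> b \<in> S \<Longrightarrow> a \<noteq> b \<Longrightarrow> rl n a b \<or> rl n b a"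
    using rl_total \<open>S \<subseteq> mons n\<close> by blast
qed

lemma mdeg_updk: "mdeg (Suc k) (a(k := v)) = mdeg k a + v"
  using mdeg_Suc[of k "a(k := v)"] mdeg_upd_out[of k k a v] by simp

lemma rl_last: "rl (Suc k) M N \<Longrightarrow> M k \<le> N k"
  unfolding rl_def by (metis less_Suc_eq less_or_eq_imp_le)

lemma rl_shift:
  assumes "rl (Suc k) M N" "e \<le> M k" "e \<le> N k"
  shows "rl (Suc k) (M(k := M k - e)) (N(k := N k - e))"
proof -
  obtain s where s: "s < Suc k" "M s < N s" "\<And>t. s < t \<Longrightarrow> t < Suc k \<Longrightarrow> M t = N t"
    using assms(1) unfolding rl_def by blast
  show ?thesis unfolding rl_def
  proof (intro exI[of _ s] conjI allI impI)
    show "s < Suc k" by (rule s(1))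
    show "(M(k := M k - e)) s < (N(k := N k - e)) s"
      using s(2) assms(2,3) by (cases "s = k") auto
    fix t assume "s < t \<and> t < Suc k"
    then show "(M(k := M k - e)) t = (N(k := N k - e)) t" using s(3) by auto
  qed
qed

lemma mdvd_eq_deg:
  assumes "mdvd a b" "a \<in> mons k" "b \<in> mons k" "mdeg k a = mdeg k b"
  shows "a = b"
proof (rule ccontr)
  assume "a \<noteq> b"
  then obtain i where i: "a i \<noteq> b i" by (meson ext)
  have ik: "i < k"
  proof (rule ccontr)
    assume "\<not> i < k"
    then show False using i assms(2,3) unfolding mons_def by auto
  qed
  have "a i < b i" using i assms(1) unfolding mdvd_def by (meson le_neq_implies_less)
  then have "mdeg k a < mdeg k b" unfolding mdeg_def
    using assms(1) ik unfolding mdvd_def by (intro sum_strict_mono_ex1) auto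
  then show False using assms(4) by simp
qed

locale constr =
  fixes h :: "nat \<Rightarrow> nat" and J :: "(nat \<Rightarrow> nat) set" and k :: nat and P :: bool and m :: nat
  assumes h0: "h 0 = 1"
    and arJ: "almost_revlex k J"
    and hJ: "\<And>d. hilb k J d = hder h 1 d"
    and Hlow: "\<And>d. 1 \<le> d \<Longrightarrow> \<not> P \<or> d \<le> m \<Longrightarrow> h d = hder h 1 d + h (d - 1)"
    and Hhigh: "\<And>d. P \<Longrightarrow> m < d \<Longrightarrow> h d \<le> h (d - 1) \<and> hder h 1 d = 0"
begin

definition low :: "(nat \<Rightarrow> nat) \<Rightarrow> bool" where
  "low b \<longleftrightarrow> b(k := 0) \<notin> J"

definition Sm :: "(nat \<Rightarrow> nat) set" where
  "Sm = {a \<in> mons (Suc k). mdeg (Suc k) a = m \<and> low a}"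

definition Bk :: "nat \<Rightarrow> (nat \<Rightarrow> nat) set" where
  "Bk j = bset (rl (Suc k)) Sm j"

definition top :: "(nat \<Rightarrow> nat) \<Rightarrow> bool" where
  "top b \<longleftrightarrow> mdeg (Suc k) b - m \<le> b k \<and>
     b(k := b k - (mdeg (Suc k) b - m)) \<in> Bk (h (mdeg (Suc k) b))"

definition inS :: "(nat \<Rightarrow> nat) \<Rightarrow> bool" where
  "inS b \<longleftrightarrow> b \<in> mons (Suc k) \<and> (if P \<and> m < mdeg (Suc k) b then top b else low b)"

definition II :: "(nat \<Rightarrow> nat) set" where
  "II = {b \<in> mons (Suc k). \<not> inS b}"

lemma miJ: "monomial_ideal k J" using arJ unfolding almost_revlex_def by simp

lemma finSm: "finite Sm"
  unfolding Sm_def by (rule rev_finite_subset[OF finite_deg[of "Suc k" m]]) blast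

lemma so: "sorder (rl (Suc k)) Sm"
proof -
  have "Sm \<subseteq> mons (Suc k)" unfolding Sm_def by blast
  then show ?thesis using sorder_rl finSm by blast
qed

lemma Bk_sub: "Bk j \<subseteq> Sm"
  unfolding Bk_def using sorder.bset_sub[OF so] .

lemma low_upd: "low (b(k := v)) \<longleftrightarrow> low b"
  unfolding low_def by simp

lemma low_mdvd: assumes "mdvd a b" "b \<in> mons (Suc k)" "low b" shows "low a"
proof -
  have "mdvd (a(k := 0)) (b(k := 0))" using assms(1) unfolding mdvd_def by auto
  moreover have "b(k := 0) \<in> mons k" using assms(2) mons_Suc by blast
  ultimately show ?thesis using assms(3) mi_up[OF miJ] unfolding low_def by blast
qed

lemma h_anti: assumes "P" "m \<le> d" "d \<le> e" shows "h e \<le> h d"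
  using assms(3)
proof (induction e)
  case 0 then show ?case by simp
next
  case (Suc e)
  show ?case
  proof (cases "d = Suc e")
    case True then show ?thesis by simp
  next
    case False
    then have "d \<le> e" using Suc.prems by simp
    then have "h e \<le> h d" using Suc.IH by simp
    moreover have "h (Suc e) \<le> h e" using Hhigh[OF assms(1), of "Suc e"] assms(2) \<open>d \<le> e\<close> by simp
    ultimately show ?thesis by simp
  qed
qed

lemma low_count:
  "\<not> P \<or> d \<le> m \<Longrightarrow> card {b \<in> mons (Suc k). mdeg (Suc k) b = d \<and> low b} = h d"
proof (induction d)
  case 0
  have "{b \<in> mons (Suc k). mdeg (Suc k) b = 0 \<and> low b} = {\<lambda>_. 0}"
  proof -
    have "hilb k J 0 = 1" using hJ[of 0] by simp
    then have "(\<lambda>_. 0::nat) \<notin> J" by (simp add: hilb0 split: if_splits)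
    moreover have "(\<lambda>_. 0::nat)(k := 0) = (\<lambda>_. 0)" by auto
    ultimately show ?thesis using mdeg_zero[of _ "Suc k"] zero_mons[of "Suc k"] unfolding low_def by auto
  qed
  then show ?case using h0 by simp
next
  case (Suc d)
  have A: "{b \<in> mons k. mdeg k b = Suc d \<and> low b} = {b \<in> mons k. mdeg k b = Suc d \<and> b \<notin> J}"
    unfolding low_def using mons_k_zero by (metis fun_upd_triv)
  have B: "\<And>c. low (c(k := Suc (c k))) = low c" by (rule low_upd)
  have "card {b \<in> mons (Suc k). mdeg (Suc k) b = Suc d \<and> low b} =
        hilb k J (Suc d) + card {c \<in> mons (Suc k). mdeg (Suc k) c = d \<and> low c}"
    using split_count[of k d low] unfolding A B hilb_def by simp
  also have "\<dots> = hder h 1 (Suc d) + h d" using hJ Suc by auto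
  also have "\<dots> = h (Suc d)" using Hlow[of "Suc d"] Suc.prems by simp
  finally show ?case .
qed

lemma card_Sm: "P \<Longrightarrow> card Sm = h m"
  unfolding Sm_def using low_count[of m] by simp

lemma top_low: "top b \<Longrightarrow> low b"
proof -
  assume "top b"
  then have "b(k := b k - (mdeg (Suc k) b - m)) \<in> Sm" using Bk_sub unfolding top_def by blast
  then have "low (b(k := b k - (mdeg (Suc k) b - m)))" unfolding Sm_def by simp
  then show "low b" using low_upd by simp
qed

lemma inS_low: "inS b \<Longrightarrow> low b"
  unfolding inS_def using top_low by (auto split: if_splits)

end

context constr begin

lemma top_char:
  assumes "b \<in> mons (Suc k)" "m < mdeg (Suc k) b"
  shows "mdeg (Suc k) b - m \<le> b k \<longleftrightarrow> mdeg k b \<le> m"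
  using assms(2) mdeg_Suc[of k b] by auto

lemma ideal_II: "monomial_ideal (Suc k) II"
  unfolding monomial_ideal_def
proof (intro conjI ballI impI)
  show "II \<subseteq> mons (Suc k)" unfolding II_def by blast
  fix a b assume a: "a \<in> II" and b: "b \<in> mons (Suc k)" and dv: "mdvd a b"
  show "b \<in> II"
  proof (rule ccontr)
    assume "b \<notin> II"
    then have Sb: "inS b" using b unfolding II_def by simp
    have am: "a \<in> mons (Suc k)" and na: "\<not> inS a" using a unfolding II_def by auto
    have la: "low a" using low_mdvd[OF dv b inS_low[OF Sb]] .
    show False
    proof (cases "P \<and> m < mdeg (Suc k) a")
      case False
      then show False using na am la unfolding inS_def if_not_P[OF False] by simp
    next
      case True
      have dab: "mdeg (Suc k) a \<le> mdeg (Suc k) b" using mdvd_mdeg[OF dv] .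
      have dkab: "mdeg k a \<le> mdeg k b" using mdvd_mdeg[OF dv] .
      have Pb: "P \<and> m < mdeg (Suc k) b" using True dab by simp
      have tb: "top b" using Sb Pb unfolding inS_def by simp
      have ebk: "mdeg (Suc k) b - m \<le> b k" using tb unfolding top_def by simp
      have dkb: "mdeg k b \<le> m" using top_char[OF b] Pb ebk by blast
      have dka: "mdeg k a \<le> m" using dkab dkb by simp
      have eak: "mdeg (Suc k) a - m \<le> a k" using top_char[OF am] True dka by blast
      define aa where "aa = a(k := a k - (mdeg (Suc k) a - m))"
      define ab where "ab = b(k := b k - (mdeg (Suc k) b - m))"
      have abB: "ab \<in> Bk (h (mdeg (Suc k) b))" using tb unfolding top_def ab_def by simp
      have aak: "aa k = m - mdeg k a" unfolding aa_def using mdeg_Suc[of k a] True by simp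
      have abk: "ab k = m - mdeg k b" unfolding ab_def using mdeg_Suc[of k b] Pb by simp
      have aaS: "aa \<in> Sm"
      proof -
        have "aa \<in> mons (Suc k)" unfolding aa_def using am mons_upd by blast
        moreover have "mdeg (Suc k) aa = m" unfolding aa_def mdeg_updk
          using mdeg_Suc[of k a] True dka by simp
        moreover have "low aa" unfolding aa_def using la low_upd by simp
        ultimately show ?thesis unfolding Sm_def by simp
      qed
      have "aa \<in> Bk (h (mdeg (Suc k) b))"
      proof (cases "mdeg k a = mdeg k b")
        case True
        have "mdvd (a(k := 0)) (b(k := 0))" using dv unfolding mdvd_def by auto
        moreover have "a(k := 0) \<in> mons k" "b(k := 0) \<in> mons k" using am b mons_Suc by blast+
        moreover have "mdeg k (a(k := 0)) = mdeg k (b(k := 0))"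
          using True mdeg_upd_out[of k k] by simp
        ultimately have "a(k := 0) = b(k := 0)" using mdvd_eq_deg by blast
        then have "aa = ab" using aak abk True unfolding aa_def ab_def
          by (metis fun_upd_triv fun_upd_upd fun_upd_same)
        then show ?thesis using abB by simp
      next
        case False
        then have "mdeg k a < mdeg k b" using dkab by simp
        then have "ab k < aa k" using aak abk dkb by simp
        then have "rl (Suc k) ab aa" unfolding rl_def
          by (intro exI[of _ k]) auto
        then show ?thesis using sorder.bset_down[OF so] abB aaS unfolding Bk_def by blast
      qed
      moreover have "h (mdeg (Suc k) b) \<le> h (mdeg (Suc k) a)" using h_anti True dab by simp
      ultimately have "aa \<in> Bk (h (mdeg (Suc k) a))"
        using sorder.bset_mono[OF so] unfolding Bk_def by blast
      then have "top a" unfolding top_def aa_def using eak by simp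
      then show False using na am True unfolding inS_def if_P[OF True] by simp
    qed
  qed
qed

end

context constr begin

lemma inS_lowtype: "b \<in> mons (Suc k) \<Longrightarrow> \<not> (P \<and> m < mdeg (Suc k) b) \<Longrightarrow> inS b \<longleftrightarrow> low b"
  unfolding inS_def by (simp only: if_False) simp

lemma inS_toptype: "b \<in> mons (Suc k) \<Longrightarrow> P \<and> m < mdeg (Suc k) b \<Longrightarrow> inS b \<longleftrightarrow> top b"
  unfolding inS_def by simp

lemma ar_II: "almost_revlex (Suc k) II"
  unfolding almost_revlex_def
proof (intro conjI ideal_II ballI allI impI)
  fix M N assume M: "M \<in> mons (Suc k)" and mg: "min_gen II N"
    and dg: "mdeg (Suc k) M = mdeg (Suc k) N" and gt: "revlex_gt (Suc k) M N"
  have NI: "N \<in> II" using mg unfolding min_gen_def by simp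
  have N: "N \<in> mons (Suc k)" "\<not> inS N" using NI unfolding II_def by auto
  have rlMN: "rl (Suc k) M N" using gt revlex_rl[OF dg] by simp
  have MkNk: "M k \<le> N k" using rl_last[OF rlMN] .
  have mgN: "\<And>G. G \<in> II \<Longrightarrow> mdvd G N \<Longrightarrow> G = N" using mg unfolding min_gen_def by blast
  let ?Nm = "N(k := N k - 1)"
  have Nm: "?Nm \<in> mons (Suc k)" using N(1) mons_upd by blast
  have dNm: "N k > 0 \<Longrightarrow> mdeg (Suc k) ?Nm = mdeg (Suc k) N - 1"
    using mdeg_updk[of k N "N k - 1"] mdeg_Suc[of k N] by simp
  show "M \<in> II"
  proof (rule ccontr)
    assume "M \<notin> II"
    then have SM: "inS M" using M unfolding II_def by simp
    show False
    proof (cases "P \<and> m < mdeg (Suc k) N")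
      case False
      have lM: "low M" using inS_low[OF SM] .
      have nlN: "\<not> low N" using N inS_lowtype[OF N(1) False] by simp
      have Nk0: "N k = 0"
      proof (rule ccontr)
        assume nz: "N k \<noteq> 0"
        have "\<not> (P \<and> m < mdeg (Suc k) ?Nm)" using False dNm nz by auto
        moreover have "\<not> low ?Nm" using nlN low_upd by simp
        ultimately have "\<not> inS ?Nm" using inS_lowtype[OF Nm] by simp
        then have "?Nm \<in> II" using Nm unfolding II_def by simp
        moreover have "mdvd ?Nm N" by (rule mdvd_upd_pred)
        ultimately have "?Nm = N" using mgN by blast
        then have "N k - 1 = N k" by (metis fun_upd_same)
        then show False using nz by simp
      qed
      have Mk0: "M k = 0" using MkNk Nk0 by simp
      have Mk: "M \<in> mons k" using M Mk0 mons_Suc by (metis fun_upd_triv)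
      have Nk: "N \<in> mons k" using N(1) Nk0 mons_Suc by (metis fun_upd_triv)
      have NJ: "N \<in> J" using nlN Nk0 unfolding low_def by (metis fun_upd_triv)
      have mgJ: "min_gen J N" unfolding min_gen_def
      proof (intro conjI ballI impI NJ)
        fix G assume G: "G \<in> J" "mdvd G N"
        have Gk: "G \<in> mons k" using mi_sub[OF miJ G(1)] .
        have GS: "G \<in> mons (Suc k)" using mons_mono[OF Gk] .
        have "mdeg (Suc k) G \<le> mdeg (Suc k) N" using mdvd_mdeg[OF G(2)] .
        then have "\<not> (P \<and> m < mdeg (Suc k) G)" using False by auto
        moreover have "\<not> low G" using G(1) mons_k_zero[OF Gk] unfolding low_def by (metis fun_upd_triv)
        ultimately have "G \<in> II" using inS_lowtype[OF GS] GS unfolding II_def by simp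
        then show "G = N" using mgN G(2) by blast
      qed
      have dgk: "mdeg k M = mdeg k N" using dg Mk0 Nk0 mdeg_Suc[of k] by simp
      have "rl k M N"
      proof -
        obtain s where s: "s < Suc k" "M s < N s" "\<And>t. s < t \<Longrightarrow> t < Suc k \<Longrightarrow> M t = N t"
          using rlMN unfolding rl_def by blast
        have "s \<noteq> k" using s(2) Mk0 Nk0 by auto
        then show ?thesis unfolding rl_def using s by (intro exI[of _ s]) auto
      qed
      then have "revlex_gt k M N" using revlex_rl[OF dgk] by simp
      then have "M \<in> J" using arJ Mk mgJ dgk unfolding almost_revlex_def by blast
      then show False using lM Mk0 unfolding low_def by (metis fun_upd_triv)
    next
      case True
      let ?d = "mdeg (Suc k) N"
      let ?e = "?d - m"
      have PM: "P \<and> m < mdeg (Suc k) M" using True dg by simp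
      have tM: "top M" using inS_toptype[OF M PM] SM by simp
      have eM: "?e \<le> M k" and aMB: "M(k := M k - ?e) \<in> Bk (h ?d)"
        using tM dg unfolding top_def by auto
      have eN: "?e \<le> N k" using eM MkNk by simp
      have ntN: "\<not> top N" using inS_toptype[OF N(1) True] N(2) by simp
      let ?aN = "N(k := N k - ?e)"
      have aNB: "?aN \<notin> Bk (h ?d)" using ntN eN unfolding top_def by simp
      have rlA: "rl (Suc k) (M(k := M k - ?e)) ?aN" using rl_shift[OF rlMN eM eN] .
      have aNm: "?aN \<in> mons (Suc k)" using N(1) mons_upd by blast
      have daN: "mdeg (Suc k) ?aN = m" using mdeg_updk[of k N] mdeg_Suc[of k N] True eN by simp
      have nlaN: "\<not> low ?aN"
      proof
        assume "low ?aN"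
        then have "?aN \<in> Sm" using aNm daN unfolding Sm_def by simp
        then have "?aN \<in> Bk (h ?d)" using sorder.bset_down[OF so] aMB rlA unfolding Bk_def by blast
        then show False using aNB by simp
      qed
      have nlN: "\<not> low N" using nlaN low_upd by simp
      have Nk: "N k > 0" using eN True by linarith
      have "\<not> inS ?Nm"
      proof (cases "P \<and> m < mdeg (Suc k) ?Nm")
        case False
        then show ?thesis using inS_lowtype[OF Nm False] nlN low_upd by simp
      next
        case T2: True
        have dn: "mdeg (Suc k) ?Nm = ?d - 1" using dNm Nk by simp
        have "?Nm(k := ?Nm k - (mdeg (Suc k) ?Nm - m)) = ?aN"
          using dn Nk eN T2 by (simp add: fun_eq_iff) arith
        moreover have "?aN \<notin> Sm" using nlaN unfolding Sm_def by simp
        ultimately have "\<not> top ?Nm" unfolding top_def using Bk_sub by auto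
        then show ?thesis using inS_toptype[OF Nm T2] by simp
      qed
      then have "?Nm \<in> II" using Nm unfolding II_def by simp
      then have "?Nm = N" using mgN mdvd_upd_pred by blast
      then have "N k - 1 = N k" by (metis fun_upd_same)
      then show False using Nk by simp
    qed
  qed
qed

end

context constr begin

lemma hilb_II: "hilb (Suc k) II d = h d"
proof -
  have eq: "{b \<in> mons (Suc k). mdeg (Suc k) b = d \<and> b \<notin> II} =
            {b \<in> mons (Suc k). mdeg (Suc k) b = d \<and> inS b}"
    unfolding II_def by blast
  show ?thesis
  proof (cases "P \<and> m < d")
    case False
    have "{b \<in> mons (Suc k). mdeg (Suc k) b = d \<and> inS b} =
          {b \<in> mons (Suc k). mdeg (Suc k) b = d \<and> low b}"
      using inS_lowtype False by blast
    moreover have "\<not> P \<or> d \<le> m" using False by auto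
    ultimately show ?thesis unfolding hilb_def eq using low_count by simp
  next
    case True
    let ?e = "d - m"
    have "{b \<in> mons (Suc k). mdeg (Suc k) b = d \<and> inS b} =
          {b \<in> mons (Suc k). mdeg (Suc k) b = d \<and> top b}"
      using inS_toptype True by blast
    also have "card \<dots> = card (Bk (h d))"
    proof (rule bij_betw_same_card[where f = "\<lambda>b. b(k := b k - ?e)"])
      show "bij_betw (\<lambda>b. b(k := b k - ?e)) {b \<in> mons (Suc k). mdeg (Suc k) b = d \<and> top b} (Bk (h d))"
      proof (rule bij_betw_byWitness[where f' = "\<lambda>a. a(k := a k + ?e)"])
        show "\<forall>a\<in>{b \<in> mons (Suc k). mdeg (Suc k) b = d \<and> top b}.
                (\<lambda>a. a(k := a k + ?e)) ((\<lambda>b. b(k := b k - ?e)) a) = a"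
          unfolding top_def by (auto simp: fun_eq_iff)
        show "\<forall>a'\<in>Bk (h d). (\<lambda>b. b(k := b k - ?e)) ((\<lambda>a. a(k := a k + ?e)) a') = a'"
          by (auto simp: fun_eq_iff)
        show "(\<lambda>b. b(k := b k - ?e)) ` {b \<in> mons (Suc k). mdeg (Suc k) b = d \<and> top b} \<subseteq> Bk (h d)"
          unfolding top_def by auto
        show "(\<lambda>a. a(k := a k + ?e)) ` Bk (h d) \<subseteq> {b \<in> mons (Suc k). mdeg (Suc k) b = d \<and> top b}"
        proof
          fix b assume "b \<in> (\<lambda>a. a(k := a k + ?e)) ` Bk (h d)"
          then obtain a where a: "a \<in> Bk (h d)" "b = a(k := a k + ?e)" by blast
          have aS: "a \<in> Sm" using a(1) Bk_sub by blast
          then have am: "a \<in> mons (Suc k)" "mdeg (Suc k) a = m" unfolding Sm_def by auto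
          have bm: "b \<in> mons (Suc k)" using a(2) am(1) mons_upd by blast
          have db: "mdeg (Suc k) b = d" using a(2) mdeg_updk[of k a] mdeg_Suc[of k a] am True by simp
          have "?e \<le> b k" using a(2) by simp
          moreover have "b(k := b k - ?e) = a" using a(2) by (simp add: fun_eq_iff)
          ultimately have "top b" unfolding top_def db using a(1) by simp
          then show "b \<in> {b \<in> mons (Suc k). mdeg (Suc k) b = d \<and> top b}" using bm db by simp
        qed
      qed
    qed
    also have "\<dots> = h d"
    proof -
      have "card (Bk (h d)) = min (h d) (card Sm)" unfolding Bk_def using sorder.card_bset[OF so] .
      moreover have "card Sm = h m" using card_Sm True by simp
      moreover have "h d \<le> h m" using h_anti True by simp
      ultimately show ?thesis by simp
    qed
    finally show ?thesis unfolding hilb_def eq .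
  qed
qed

end

lemma hder_add: "hder (hder h a) j = hder h (j + a)"
  by (induction j) (auto simp: fun_eq_iff)

lemma shape_le: "shape g \<Longrightarrow> 1 \<le> d \<Longrightarrow> g d \<le> g (d - 1) \<Longrightarrow> d \<le> e \<Longrightarrow> g e \<le> g (e - 1)"
  unfolding shape_def by blast

lemma delta_of: assumes "h 0 = 1" "h 1 = 0" "shape h" shows "h = delta"
proof
  fix d show "h d = delta d"
  proof (induction d)
    case 0 then show ?case using assms by (simp add: delta_def)
  next
    case (Suc d)
    have "h (Suc d) \<le> h d" using shape_le[OF assms(3), of 1 "Suc d"] assms(1,2) by simp
    moreover have "h d \<le> 1" using Suc by (simp add: delta_def split: if_splits)
    moreover have "d = 0 \<or> h d = 0" using Suc by (simp add: delta_def split: if_splits)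
    ultimately show ?case using assms(2) by (auto simp: delta_def)
  qed
qed

lemma ar_empty: "almost_revlex 0 {}"
  unfolding almost_revlex_def monomial_ideal_def min_gen_def by simp

theorem sufficiency:
  "h 0 = 1 \<Longrightarrow> h 1 = n \<Longrightarrow> (\<forall>i. shape (hder h i)) \<Longrightarrow>
   \<exists>I. almost_revlex n I \<and> (\<forall>d. hilb n I d = h d)"
proof (induction n arbitrary: h)
  case 0
  have hd: "h = delta" using delta_of[of h] 0 hder.simps(1) by metis
  have "hilb 0 {} 0 = 1" by (simp add: hilb0)
  then have "hilb 0 {} = delta" by (rule hilb_0vars)
  then show ?case using ar_empty hd by auto
next
  case (Suc k h)
  let ?g = "hder h 1"
  have g0: "?g 0 = 1" by simp
  have g1: "?g 1 = k" using hder_1[of h 1] Suc.prems by simp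
  have gs: "\<forall>i. shape (hder ?g i)" using Suc.prems(3) hder_Suc' by metis
  obtain J where J: "almost_revlex k J" "\<And>d. hilb k J d = ?g d" using Suc.IH[OF g0 g1 gs] by blast
  have sh: "shape h" using Suc.prems(3) hder.simps(1) by metis
  show ?case
  proof (cases "\<exists>d\<ge>1. h d \<le> h (d - 1)")
    case True
    define r where "r = (LEAST d. d \<ge> 1 \<and> h d \<le> h (d - 1))"
    have r: "r \<ge> 1" "h r \<le> h (r - 1)" using LeastI_ex[OF True[simplified]] unfolding r_def by auto
    have rmin: "\<And>d. d \<ge> 1 \<Longrightarrow> h d \<le> h (d - 1) \<Longrightarrow> r \<le> d" unfolding r_def by (simp add: Least_le)
    interpret C: constr h J k True "r - 1"
    proof
      show "h 0 = 1" by (rule Suc.prems(1))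
      show "almost_revlex k J" by (rule J(1))
      show "\<And>d. hilb k J d = hder h 1 d" by (rule J(2))
      fix d
      show "1 \<le> d \<Longrightarrow> \<not> True \<or> d \<le> r - 1 \<Longrightarrow> h d = hder h 1 d + h (d - 1)"
      proof -
        assume "1 \<le> d" "\<not> True \<or> d \<le> r - 1"
        then have "\<not> h d \<le> h (d - 1)" using rmin r(1) by fastforce
        then show ?thesis using \<open>1 \<le> d\<close> by (cases d) auto
      qed
      show "True \<Longrightarrow> r - 1 < d \<Longrightarrow> h d \<le> h (d - 1) \<and> hder h 1 d = 0"
      proof -
        assume "r - 1 < d"
        then have "h d \<le> h (d - 1)" using shape_le[OF sh r(1) r(2)] by simp
        moreover have "d \<ge> 1" using \<open>r - 1 < d\<close> by simp
        ultimately show ?thesis by (cases d) auto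
      qed
    qed
    show ?thesis using C.ar_II C.hilb_II by blast
  next
    case False
    interpret C: constr h J k False 0
    proof
      show "h 0 = 1" by (rule Suc.prems(1))
      show "almost_revlex k J" by (rule J(1))
      show "\<And>d. hilb k J d = hder h 1 d" by (rule J(2))
      fix d
      show "1 \<le> d \<Longrightarrow> \<not> False \<or> d \<le> 0 \<Longrightarrow> h d = hder h 1 d + h (d - 1)"
      proof -
        assume "1 \<le> d"
        then have "\<not> h d \<le> h (d - 1)" using False by blast
        then show ?thesis using \<open>1 \<le> d\<close> by (cases d) auto
      qed
      show "False \<Longrightarrow> 0 < d \<Longrightarrow> h d \<le> h (d - 1) \<and> hder h 1 d = 0" by simp
    qed
    show ?thesis using C.ar_II C.hilb_II by blast
  qed
qed

lemma shape_unimodal: assumes "\<forall>i. shape (hder h i)" shows "unimodal_at_each_tail h"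
  unfolding unimodal_at_each_tail_def
proof (intro allI impI)
  fix i d assume "D_idx h \<le> i \<and> i < max 1 (h 1)" and rf: "r_fin h i" and d: "r_val h i \<le> d"
  have rv: "r_val h i \<ge> 1" "hder h i (r_val h i) \<le> hder h i (r_val h i - 1)"
    using LeastI_ex[of "\<lambda>d. d \<ge> 1 \<and> hder h i d \<le> hder h i (d - 1)"] rf
    unfolding r_val_def r_fin_def by auto
  show "hder h i d \<le> hder h i (d - 1)"
    using shape_le[OF spec[OF assms, of i] rv d] .
qed

lemma unimodal_shape: assumes h0: "h 0 = 1" and u: "unimodal_at_each_tail h"
  shows "\<forall>i. shape (hder h i)"
proof -
  have small: "\<And>i. i < max 1 (h 1) \<Longrightarrow> shape (hder h i)"
  proof -
    fix i assume i: "i < max 1 (h 1)"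
    show "shape (hder h i)" unfolding shape_def
    proof (intro allI impI)
      fix d e assume d: "1 \<le> d" and le: "hder h i d \<le> hder h i (d - 1)" and e: "d \<le> e"
      have rf: "r_fin h i" unfolding r_fin_def using d le by blast
      have "D_idx h \<le> i" unfolding D_idx_def using i rf by (simp add: Least_le)
      moreover have "r_val h i \<le> d" unfolding r_val_def using d le by (simp add: Least_le)
      ultimately show "hder h i e \<le> hder h i (e - 1)"
        using u i rf e unfolding unimodal_at_each_tail_def by auto
    qed
  qed
  define q where "q = max 1 (h 1) - 1"
  have q: "q < max 1 (h 1)" unfolding q_def by simp
  have sq: "shape (hder h q)" using small[OF q] .
  have "hder h q 1 \<le> hder h q 0" using hder_1[of h q] hder_0[of h q] h0 unfolding q_def by simp
  then have dec: "\<And>e. 1 \<le> e \<Longrightarrow> hder h q e \<le> hder h q (e - 1)"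
    using shape_le[OF sq, of 1] by simp
  have hq: "hder h (Suc q) = delta"
  proof
    fix d show "hder h (Suc q) d = delta d"
      using dec[of d] by (cases d) (auto simp: delta_def)
  qed
  show ?thesis
  proof
    fix i show "shape (hder h i)"
    proof (cases "i < max 1 (h 1)")
      case True then show ?thesis using small by blast
    next
      case False
      then have "i = (i - Suc q) + Suc q" unfolding q_def by simp
      then have "hder h i = hder (hder h (Suc q)) (i - Suc q)" using hder_add by metis
      then show ?thesis using hq hder_delta shape_delta by simp
    qed
  qed
qed

theorem corollary3p10:
  fixes h :: "nat \<Rightarrow> nat"
  assumes "h 0 = 1"
  shows "unimodal_at_each_tail h \<longleftrightarrow>
         (\<exists>n I. almost_revlex n I \<and> (\<forall>d. hilb n I d = h d))"
proof
  assume "unimodal_at_each_tail h"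
  then have "\<forall>i. shape (hder h i)" using unimodal_shape assms by blast
  then show "\<exists>n I. almost_revlex n I \<and> (\<forall>d. hilb n I d = h d)"
    using sufficiency[of h "h 1"] assms by blast
next
  assume "\<exists>n I. almost_revlex n I \<and> (\<forall>d. hilb n I d = h d)"
  then obtain n I where nI: "almost_revlex n I" "\<And>d. hilb n I d = h d" by blast
  then have "hilb n I = h" by auto
  then have "\<forall>i. shape (hder h i)" using necessity[OF nI(1)] nI(2)[of 0] assms by metis
  then show "unimodal_at_each_tail h" by (rule shape_unimodal)
qed

end
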